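(* If $m,n\in\mathbb{Z}$ with $\gcd(m,n)=1$ (and $mn(m+n)\ne0$), then $A(m,n)=7^a(14b+1)$ for some integers $a,b\ge 0$, and every prime factor of $14b+1$ is congruent to $1 \pmod 7$. Moreover, for every prime $p\equiv 1\pmod 7$ there are infinitely many values $c=-\frac{A(m,n)}{B(m,n)}$ (with $\gcd(m,n)=1$, $mn(m+n)\neq0$) such that $p\mid A(m,n)$; for each of these $f_c(x)=x^2+c$ has a rational $3$-cycle.
   Context: $A(m,n)=m^6+2m^5n+4m^4n^2+8m^3n^3+9m^2n^4+4mn^5+n^6$, $B(m,n)=4m^2n^2(m+n)^2$. Standing fact: $f_c(x)=x^2+c$ ($c\in\mathbb{Q}$) has a rational $3$-cycle (orbit of a rational point of minimal period 3) if and only if $c=-A(m,n)/B(m,n)$ for some coprime integers $m,n$ with $mn(m+n)\neq 0$, and this fraction is then in lowest terms. *)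

theory Defs
  imports Complex_Main "HOL-Computational_Algebra.Primes"
begin

definition A :: "int \<Rightarrow> int \<Rightarrow> int" where
  "A m n = m^6 + 2*m^5*n + 4*m^4*n^2 + 8*m^3*n^3 + 9*m^2*n^4 + 4*m*n^5 + n^6"

definition B :: "int \<Rightarrow> int \<Rightarrow> int" where
  "B m n = 4*m^2*n^2*(m+n)^2"

definition fc :: "rat \<Rightarrow> rat \<Rightarrow> rat" where
  "fc c x = x^2 + c"

definition has_rational_3cycle :: "rat \<Rightarrow> bool" where
  "has_rational_3cycle c \<longleftrightarrow> (\<exists>x::rat. (fc c ^^ 3) x = x \<and> fc c x \<noteq> x)"

end

theory Submission
  imports Defs "HOL-Number_Theory.Number_Theory"
begin

lemma I1: fixes m n :: int shows
 "(let u = 3*n^4 + 6*m*n^3 + 3*m^2*n^2 + m^3*n + m^4; v = 2*n^4 in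
   u^6 + u^5*v + u^4*v^2 + u^3*v^3 + u^2*v^4 + u*v^5 + v^6) = A m n *
  (2059*n^18 + 10028*m*n^17 + 24613*m^2*n^16 + 39608*m^3*n^15 + 48322*m^4*n^14 + 49256*m^5*n^13
   + 43636*m^6*n^12 + 33656*m^7*n^11 + 22963*m^8*n^10 + 14204*m^9*n^9 + 7869*m^10*n^8 + 3880*m^11*n^7
   + 1759*m^12*n^6 + 708*m^13*n^5 + 245*m^14*n^4 + 80*m^15*n^3 + 21*m^16*n^2 + 4*m^17*n + m^18)"
  unfolding A_def Let_def by (Groebner_Basis.algebra)

lemma I4: fixes w :: int shows "A (w + w^4) 1 = (1+w+w^2+w^3+w^4+w^5+w^6) *
  (1 + 3*w + 5*w^2 - w^3 + 12*w^5 + 5*w^6 - 8*w^7 + 6*w^8 + 16*w^9 - 7*w^10 - 4*w^11 + 15*w^12 - 2*w^13 - 4*w^14 + 6*w^15 - w^17 + w^18)"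
  unfolding A_def power_one mult_1_right by (Groebner_Basis.algebra)

lemma A_sos: fixes m n :: int shows "16 * A m n = (4*m^3+4*m^2*n+m*n^2)^2 + 10*n^2*(2*m^2+3*m*n+n^2)^2 + n^4*(9*m^2 + (2*m+n)^2 + 5*n^2)"
  unfolding A_def by (Groebner_Basis.algebra)

lemma A_nonneg: "A m n \<ge> 0"
proof -
  have "16 * A m n \<ge> 0" unfolding A_sos by (intro add_nonneg_nonneg mult_nonneg_nonneg) auto
  then show ?thesis by simp
qed

lemma A_odd:
  assumes "coprime m n"
  shows "odd (A m n)"
proof -
  have ne: "\<not> (even m \<and> even n)"
    using coprime_common_divisor[OF assms, of 2] by auto
  have "A m n = m^6 + m^2*n^4 + n^6 + 2*(m^5*n + 2*m^4*n^2 + 4*m^3*n^3 + 4*m^2*n^4 + 2*m*n^5)"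
    unfolding A_def by (Groebner_Basis.algebra)
  then show ?thesis using ne by auto
qed

lemma fermat_int:
  fixes q u :: int
  assumes "prime q" "\<not> q dvd u"
  shows "[u ^ (nat q - 1) = 1] (mod q)"
proof -
  define Q where "Q = nat q"
  define a where "a = nat (u mod q)"
  have q0: "q > 0" using assms prime_gt_0_int by auto
  have qQ: "q = int Q" using q0 Q_def by auto
  have pQ: "prime Q" using assms qQ by simp
  have ia: "int a = u mod q" using q0 a_def by simp
  have "\<not> Q dvd a"
  proof
    assume "Q dvd a"
    then have "q dvd u mod q" using qQ ia by (metis of_nat_dvd_iff)
    then show False using assms(2) by (simp add: dvd_mod_iff)
  qed
  then have "[a ^ (Q - 1) = 1] (mod Q)" using fermat_theorem pQ by blast
  then have "[int a ^ (Q - 1) = 1] (mod q)" using qQ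
    by (metis cong_int_iff of_nat_1 of_nat_power)
  moreover have "[u = int a] (mod q)" using ia by (simp add: cong_def)
  then have "[u ^ (Q - 1) = int a ^ (Q - 1)] (mod q)" by (rule cong_pow)
  ultimately show ?thesis using Q_def cong_trans by blast
qed

lemma prime_dvd_7: fixes q :: int assumes "prime q" "q dvd 7" shows "q = 7"
proof -
  have "q \<le> 7" using assms(2) zdvd_imp_le by auto
  moreover have "q \<ge> 2" using assms(1) prime_ge_2_int by auto
  ultimately have "q \<in> {2,3,4,5,6,7}" by auto
  then show ?thesis using assms(2) by auto
qed

lemma prime_dvd_2: fixes q :: int assumes "prime q" "q dvd 2" shows "q = 2"
proof -
  have "q \<le> 2" using assms(2) zdvd_imp_le by auto
  moreover have "q \<ge> 2" using assms(1) prime_ge_2_int by auto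
  ultimately show ?thesis by auto
qed

lemma key:
  fixes q m n :: int
  assumes q: "prime q" and qA: "q dvd A m n" and cop: "coprime m n" and q7: "q \<noteq> 7"
  shows "q mod 7 = 1"
proof (rule ccontr)
  assume nq: "q mod 7 \<noteq> 1"
  have q2: "q \<noteq> 2" using A_odd[OF cop] qA by auto
  have qn: "\<not> q dvd n"
  proof
    assume qn: "q dvd n"
    have "A m n = m^6 + n*(2*m^5 + 4*m^4*n + 8*m^3*n^2 + 9*m^2*n^3 + 4*m*n^4 + n^5)"
      unfolding A_def by (Groebner_Basis.algebra)
    then have "q dvd m^6" using qA qn by (metis dvd_add_left_iff dvd_mult2)
    then have "q dvd m" using q prime_dvd_power by blast
    then have "is_unit q" using coprime_common_divisor[OF cop] qn by blast
    then show False using q by auto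
  qed
  define u where "u = 3*n^4 + 6*m*n^3 + 3*m^2*n^2 + m^3*n + m^4"
  define v where "v = 2*(n::int)^4"
  define F where "F = u^6 + u^5*v + u^4*v^2 + u^3*v^3 + u^2*v^4 + u*v^5 + v^6"
  have qF: "q dvd F" using I1[of n m] qA unfolding F_def u_def v_def Let_def by simp
  have qv: "\<not> q dvd v"
  proof
    assume "q dvd v"
    then have "q dvd 2 \<or> q dvd n^4" unfolding v_def using q prime_dvd_mult_iff by blast
    then show False using prime_dvd_2[OF q] q2 qn prime_dvd_power[OF q] by blast
  qed
  have quv: "\<not> q dvd (u - v)"
  proof
    assume h: "q dvd (u - v)"
    have "F = (u - v) * (u^5 + 2*u^4*v + 3*u^3*v^2 + 4*u^2*v^3 + 5*u*v^4 + 6*v^5) + 7 * v^6"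
      unfolding F_def by (Groebner_Basis.algebra)
    then have "q dvd 7 * v^6" using qF h by (metis dvd_add_right_iff dvd_mult2)
    then have "q dvd 7 \<or> q dvd v^6" using q prime_dvd_mult_iff by blast
    then show False using prime_dvd_7[OF q] q7 qv prime_dvd_power[OF q] by blast
  qed
  have d7: "q dvd u^7 - v^7"
  proof -
    have "u^7 - v^7 = (u - v) * F" unfolding F_def by (Groebner_Basis.algebra)
    then show ?thesis using qF by simp
  qed
  have qu: "\<not> q dvd u"
  proof
    assume "q dvd u"
    then have h7: "q dvd u * u^6" by (rule dvd_mult2)
    moreover have "u * u^6 = u^7" by (Groebner_Basis.algebra)
    ultimately have h7: "q dvd u^7" by simp
    have "v^7 = u^7 - (u^7 - v^7)" by simp
    then have "q dvd v^7" using dvd_diff[OF h7 d7] by metis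
    then show False using qv prime_dvd_power[OF q] by blast
  qed
  define Q where "Q = nat q"
  have q3: "q \<ge> 3" using q q2 prime_ge_2_int[OF q] by auto
  have Q3: "Q \<ge> 3" using q3 Q_def by auto
  have "\<not> 7 dvd (Q - 1)"
  proof
    assume "7 dvd (Q - 1)"
    then have "(7::int) dvd int (Q - 1)" by (metis of_nat_dvd_iff of_nat_numeral)
    moreover have "int (Q - 1) = q - 1" using Q3 Q_def by auto
    ultimately have "(7::int) dvd q - 1" by simp
    then show False using nq by presburger
  qed
  then have "coprime (7::nat) (Q - 1)" by (simp add: prime_imp_coprime)
  then obtain s where s: "[7 * s = Suc 0] (mod (Q - 1))" using cong_solve_coprime_nat by blast
  define j where "j = (7 * s) div (Q - 1)"
  have "7 * s mod (Q - 1) = 1" using s Q3 by (simp add: cong_def)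
  then have s7: "7 * s = (Q - 1) * j + 1" unfolding j_def by (metis div_mult_mod_eq mult.commute)
  have red: "[x ^ (7 * s) = x] (mod q)" if "\<not> q dvd x" for x
  proof -
    have "[x ^ (Q - 1) = 1] (mod q)" using fermat_int[OF q that] Q_def by simp
    then have "[(x ^ (Q - 1)) ^ j = 1 ^ j] (mod q)" by (rule cong_pow)
    then have "[(x ^ (Q - 1)) ^ j * x = 1 * x] (mod q)" by (intro cong_mult) auto
    moreover have "x ^ (7 * s) = (x ^ (Q - 1)) ^ j * x" using s7 by (simp add: power_mult)
    ultimately show ?thesis by simp
  qed
  have "[u ^ 7 = v ^ 7] (mod q)" using d7 by (simp add: cong_iff_dvd_diff)
  then have "[(u ^ 7) ^ s = (v ^ 7) ^ s] (mod q)" by (rule cong_pow)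
  then have "[u ^ (7 * s) = v ^ (7 * s)] (mod q)" by (simp add: power_mult)
  then have "[u = v] (mod q)" using red[OF qu] red[OF qv]
    by (meson cong_sym cong_trans)
  then show False using quv by (simp add: cong_iff_dvd_diff)
qed

lemma prod_mod7:
  fixes y :: int
  shows "y > 0 \<Longrightarrow> (\<forall>q. prime q \<and> q dvd y \<longrightarrow> q mod 7 = 1) \<Longrightarrow> y mod 7 = 1"
proof (induction "nat y" arbitrary: y rule: less_induct)
  case less
  show ?case
  proof (cases "y = 1")
    case True then show ?thesis by simp
  next
    case False
    then have "\<not> is_unit y" using less.prems(1) by auto
    then obtain q where q: "q dvd y" "prime q" using prime_divisor_exists[of y] less.prems(1) by auto
    obtain z where z: "y = q * z" using q(1) by (rule dvdE)
    have q2: "q \<ge> 2" using prime_ge_2_int[OF q(2)] .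
    have "0 < q * z" using z less.prems(1) by simp
    then have zpos: "z > 0" using q2 zero_less_mult_pos[of q z] by simp
    have "1 * z < q * z" using q2 zpos by (intro mult_strict_right_mono) auto
    then have "z < y" using z by simp
    then have lt: "nat z < nat y" using zpos by simp
    have fz: "\<forall>r. prime r \<and> r dvd z \<longrightarrow> r mod 7 = 1"
    proof (intro allI impI)
      fix r :: int assume r: "prime r \<and> r dvd z"
      then have "r dvd y" unfolding z by (simp add: dvd_mult)
      then show "r mod 7 = 1" using less.prems(2) r by blast
    qed
    have "z mod 7 = 1" using less.hyps[OF lt zpos fz] .
    moreover have "q mod 7 = 1" using less.prems(2) q by blast
    moreover have "(q * z) mod 7 = ((q mod 7) * (z mod 7)) mod 7" by (simp only: mod_mult_eq)
    ultimately have "(q * z) mod 7 = 1" by simp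
    then show ?thesis using z by simp
  qed
qed

lemma part1:
  fixes m n :: int
  assumes cop: "coprime m n" and nz: "m * n * (m + n) \<noteq> 0"
  shows "\<exists>a b :: nat. A m n = 7 ^ a * (14 * int b + 1) \<and>
               (\<forall>q :: int. prime q \<and> q dvd (14 * int b + 1) \<longrightarrow> q mod 7 = 1)"
proof -
  define N where "N = A m n"
  have Nodd: "odd N" using A_odd[OF cop] N_def by simp
  have Npos: "N > 0" using A_nonneg[of m n] Nodd N_def by (cases "N = 0") auto
  have n0: "N \<noteq> 0" using Npos by simp
  have u7: "\<not> is_unit (7::int)" by simp
  obtain y where y: "N = 7 ^ multiplicity 7 N * y" "\<not> 7 dvd y"
    using multiplicity_decompose'[where x=N and p=7, OF n0 u7] by blast
  have p7: "(0::int) < 7 ^ multiplicity 7 N" by simp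
  have "0 < 7 ^ multiplicity 7 N * y" using y(1) Npos by simp
  then have ypos: "y > 0" using p7 zero_less_mult_pos by blast
  have yodd: "odd y" using y(1) Nodd by (metis dvd_mult even_mult_iff)
  have fac: "\<forall>q. prime q \<and> q dvd y \<longrightarrow> q mod 7 = 1"
  proof (intro allI impI)
    fix q :: int assume h: "prime q \<and> q dvd y"
    have "q dvd A m n" using h y(1) N_def by (metis dvd_mult2 mult.commute)
    moreover have "q \<noteq> 7" using h y(2) by auto
    ultimately show "q mod 7 = 1" using key[of q m n] h cop by auto
  qed
  have "y mod 7 = 1" using prod_mod7[OF ypos fac] .
  then have y14: "y mod 14 = 1" using yodd by presburger
  define b where "b = nat ((y - 1) div 14)"
  have y1: "y = 14 * ((y - 1) div 14) + 1" using y14 by presburger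
  have y2: "(y - 1) div 14 \<ge> 0" using ypos by simp
  have yb: "y = 14 * int b + 1" unfolding b_def using y1 y2 by simp
  show ?thesis
    by (rule exI[of _ "multiplicity 7 N"], rule exI[of _ b]) (use y(1) yb fac N_def in auto)
qed

lemma fc_step:
  fixes Na Nb D AA BB :: int
  assumes "D \<noteq> 0" "Na^2 - AA = Nb * D" "BB = D^2"
  shows "fc (- of_int AA / of_int BB) (of_int Na / of_int D) = of_int Nb / of_int D"
proof -
  have e: "(of_int Na :: rat)^2 - of_int AA = of_int Nb * of_int D"
    using arg_cong[OF assms(2), of "of_int :: int \<Rightarrow> rat"] by simp
  have "(of_int D :: rat) \<noteq> 0" using assms(1) by simp
  then show ?thesis using e unfolding fc_def assms(3)
    by (simp add: field_simps power2_eq_square)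
qed

lemma cycle:
  fixes m n :: int
  assumes nz: "m * n * (m + n) \<noteq> 0"
  shows "has_rational_3cycle (- of_int (A m n) / of_int (B m n))"
proof -
  define D where "D = 2*m*n*(m+n)"
  define N0 where "N0 = m^3+2*m^2*n+m*n^2+n^3"
  define N1 where "N1 = m^3-m*n^2-n^3"
  define N2 where "N2 = - (m^3) - 2*m^2*n - 3*m*n^2 - n^3"
  have D0: "D \<noteq> 0" using nz unfolding D_def by simp
  have BD: "B m n = D^2" unfolding B_def D_def by (Groebner_Basis.algebra)
  have e0: "N0^2 - A m n = N1 * D" unfolding N0_def N1_def D_def A_def by (Groebner_Basis.algebra)
  have e1: "N1^2 - A m n = N2 * D" unfolding N2_def N1_def D_def A_def by (Groebner_Basis.algebra)
  have e2: "N2^2 - A m n = N0 * D" unfolding N0_def N2_def D_def A_def by (Groebner_Basis.algebra)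
  define c where "c = - of_int (A m n) / (of_int (B m n) :: rat)"
  define x where "x = (of_int N0 / of_int D :: rat)"
  have s0: "fc c x = of_int N1 / of_int D" unfolding c_def x_def using fc_step[OF D0 e0 BD] .
  have s1: "fc c (of_int N1 / of_int D) = of_int N2 / of_int D" unfolding c_def using fc_step[OF D0 e1 BD] .
  have s2: "fc c (of_int N2 / of_int D) = x" unfolding c_def x_def using fc_step[OF D0 e2 BD] .
  have "(fc c ^^ 3) x = x" using s0 s1 s2 by (simp add: numeral_3_eq_3)
  moreover have "fc c x \<noteq> x"
  proof
    assume fx: "fc c x = x"
    have eq: "(of_int N1 :: rat) / of_int D = x" using s0 fx by simp
    have Dq: "(of_int D :: rat) \<noteq> 0" using D0 by simp
    have "(of_int N1 :: rat) = of_int N0" using eq Dq unfolding x_def by (simp add: divide_cancel_right)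
    then have "N1 = N0" by simp
    then have h: "n * (m^2 + m*n + n^2) = 0" unfolding N0_def N1_def by (Groebner_Basis.algebra)
    have e4: "4 * (m^2 + m*n + n^2) = (2*m+n)^2 + 3*n^2" by (Groebner_Basis.algebra)
    have "n \<noteq> 0" using nz by auto
    have "n^2 > 0" using \<open>n \<noteq> 0\<close> by simp
    moreover have "(2*m+n)^2 \<ge> 0" by simp
    ultimately have "4 * (m^2 + m*n + n^2) > 0" unfolding e4 by linarith
    then have "m^2 + m*n + n^2 \<noteq> 0" by auto
    then show False using h \<open>n \<noteq> 0\<close> by simp
  qed
  ultimately show ?thesis unfolding has_rational_3cycle_def c_def by blast
qed


lemma order7:
  fixes p :: int
  assumes p: "prime p" and p7: "p mod 7 = 1"
  shows "\<exists>w::int. [w^7 = 1] (mod p) \<and> \<not> [w = 1] (mod p)"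
proof -
  define P where "P = nat p"
  have p0: "p > 0" using p prime_gt_0_int by auto
  have pP: "p = int P" using p0 P_def by auto
  have PP: "prime P" using p pP by simp
  have P2: "P \<ge> 2" using PP prime_ge_2_nat by auto
  obtain g where g: "residue_primroot P g" using prime_primitive_root_exists[of P] PP P2 by auto
  have ordg: "ord P g = P - 1" using g PP by (simp add: residue_primroot_def totient_prime)
  have "int (P - 1) = p - 1" using P2 pP by auto
  moreover have "(7::int) dvd p - 1" using p7 by presburger
  ultimately have "(7::int) dvd int (P - 1)" by simp
  then have d7: "7 dvd (P - 1)" by (metis of_nat_dvd_iff of_nat_numeral)
  define e where "e = (P - 1) div 7"
  have Pe: "P - 1 = 7 * e" using d7 e_def by auto
  have e0: "e > 0" using Pe P2 by auto
  have eP: "e < P - 1" using Pe e0 by auto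
  have "[g ^ (ord P g) = 1] (mod P)" by (rule ord)
  then have c1: "[(g ^ e) ^ 7 = 1] (mod P)" using ordg Pe by (simp add: power_mult[symmetric] mult.commute)
  have c2: "\<not> [g ^ e = 1] (mod P)" using ord_minimal[of e P g] e0 eP ordg by simp
  define w where "w = int (g ^ e)"
  have "[w ^ 7 = 1] (mod p)" using c1 unfolding w_def pP
    by (metis cong_int_iff of_nat_1 of_nat_power)
  moreover have "\<not> [w = 1] (mod p)" using c2 unfolding w_def pP
    by (metis cong_int_iff of_nat_1)
  ultimately show ?thesis by blast
qed

lemma A_cong:
  assumes "[m = m'] (mod p)"
  shows "[A m 1 = A m' 1] (mod p)"
  unfolding A_def using assms by (intro cong_add cong_mult cong_pow cong_refl) 

lemma A_growth:
  fixes m :: int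
  assumes "m \<ge> 1"
  shows "m * B m 1 \<le> 16 * A m 1"
proof -
  have "16 * A m 1 - m * B m 1 = 16*m^6+28*m^5+56*m^4+124*m^3+144*m^2+64*m+16"
    unfolding A_def B_def power_one mult_1_right by (Groebner_Basis.algebra)
  moreover have "16*m^6+28*m^5+56*m^4+124*m^3+144*m^2+64*m+16 \<ge> 0" using assms by simp
  ultimately show ?thesis by linarith
qed

lemma part2:
  fixes p :: int
  assumes p: "prime p" and p7: "p mod 7 = 1"
  shows "infinite {c :: rat. \<exists>m n :: int. coprime m n \<and> m * n * (m + n) \<noteq> 0 \<and>
                         c = - of_int (A m n) / of_int (B m n) \<and> p dvd A m n}
         \<and> (\<forall>c\<in>{c :: rat. \<exists>m n :: int. coprime m n \<and> m * n * (m + n) \<noteq> 0 \<and>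
                         c = - of_int (A m n) / of_int (B m n) \<and> p dvd A m n}. has_rational_3cycle c)"
  (is "infinite ?S \<and> _")
proof
  show "\<forall>c\<in>?S. has_rational_3cycle c" using cycle by blast
next
  obtain w :: int where w: "[w^7 = 1] (mod p)" "\<not> [w = 1] (mod p)" using order7[OF p p7] by blast
  have "p dvd w^7 - 1" using w(1) by (simp add: cong_iff_dvd_diff)
  moreover have "w^7 - 1 = (w - 1) * (1+w+w^2+w^3+w^4+w^5+w^6)" by (Groebner_Basis.algebra)
  moreover have "\<not> p dvd w - 1" using w(2) by (simp add: cong_iff_dvd_diff)
  ultimately have "p dvd (1+w+w^2+w^3+w^4+w^5+w^6)" using p prime_dvd_mult_iff by metis
  then have px: "p dvd A (w + w^4) 1" unfolding I4 by simp
  define x0 where "x0 = w + w^4"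
  have p1: "p \<ge> 1" using prime_ge_2_int[OF p] by simp
  have small: "\<exists>c\<in>?S. c < r" for r :: rat
  proof -
    define K where "K = \<lceil>\<bar>r\<bar>\<rceil>"
    define t where "t = \<bar>x0\<bar> + 16 * K + 1"
    define m where "m = x0 + t * p"
    have K0: "K \<ge> 0" unfolding K_def by simp
    have t0: "t \<ge> 0" unfolding t_def using K0 by simp
    have "t * p \<ge> t" using t0 p1 by (simp add: mult_le_cancel_left1)
    then have mK: "m \<ge> 16 * K + 1" unfolding m_def t_def by linarith
    then have m1: "m \<ge> 1" using K0 by linarith
    have "[m = x0] (mod p)" unfolding m_def by (simp add: cong_iff_dvd_diff)
    then have "[A m 1 = A x0 1] (mod p)" by (rule A_cong)
    then have pm: "p dvd A m 1" using px x0_def by (simp add: cong_dvd_iff)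
    define c where "c = - of_int (A m 1) / (of_int (B m 1) :: rat)"
    have cS: "c \<in> ?S" unfolding c_def using pm m1 by (intro CollectI exI[of _ m] exI[of _ 1]) auto
    have Bpos: "B m 1 > 0" unfolding B_def using m1 by simp
    have g: "of_int m * of_int (B m 1) \<le> (16 * of_int (A m 1) :: rat)"
      using A_growth[OF m1] by (metis of_int_le_iff of_int_mult of_int_numeral)
    have "of_int m / 16 \<le> (of_int (A m 1) / of_int (B m 1) :: rat)"
      using g Bpos by (simp add: field_simps)
    moreover have "(of_int m :: rat) / 16 > \<bar>r\<bar>"
    proof -
      have "\<bar>r\<bar> \<le> of_int K" unfolding K_def by simp
      moreover have "(of_int (16 * K + 1) :: rat) \<le> of_int m" using mK by (simp only: of_int_le_iff)
      then have "(of_int m :: rat) \<ge> 16 * of_int K + 1" by simp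
      ultimately show ?thesis by linarith
    qed
    ultimately have "c < r" unfolding c_def by linarith
    then show ?thesis using cS by blast
  qed
  show "infinite ?S"
  proof
    assume fin: "finite ?S"
    obtain c0 where "c0 \<in> ?S" using small[of 0] by blast
    then have ne: "?S \<noteq> {}" by blast
    obtain c where c: "c \<in> ?S" "c < Min ?S" using small[of "Min ?S"] by blast
    have "Min ?S \<le> c" using fin c(1) by simp
    then show False using c(2) by simp
  qed
qed

theorem theorem3:
  shows "(\<forall>m n :: int. coprime m n \<and> m * n * (m + n) \<noteq> 0 \<longrightarrow>
            (\<exists>a b :: nat. A m n = 7 ^ a * (14 * int b + 1) \<and>
               (\<forall>q :: int. prime q \<and> q dvd (14 * int b + 1) \<longrightarrow> q mod 7 = 1)))
       \<and> (\<forall>p :: int. prime p \<and> p mod 7 = 1 \<longrightarrow>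
            (let S = {c :: rat. \<exists>m n :: int. coprime m n \<and> m * n * (m + n) \<noteq> 0 \<and>
                         c = - of_int (A m n) / of_int (B m n) \<and> p dvd A m n}
             in infinite S \<and> (\<forall>c\<in>S. has_rational_3cycle c)))"
proof (intro conjI allI impI)
  fix m n :: int
  assume h: "coprime m n \<and> m * n * (m + n) \<noteq> 0"
  show "\<exists>a b :: nat. A m n = 7 ^ a * (14 * int b + 1) \<and>
               (\<forall>q :: int. prime q \<and> q dvd (14 * int b + 1) \<longrightarrow> q mod 7 = 1)"
    by (rule part1[OF conjunct1[OF h] conjunct2[OF h]])
next
  fix p :: int
  assume h: "prime p \<and> p mod 7 = 1"
  show "let S = {c :: rat. \<exists>m n :: int. coprime m n \<and> m * n * (m + n) \<noteq> 0 \<and>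
                         c = - of_int (A m n) / of_int (B m n) \<and> p dvd A m n}
             in infinite S \<and> (\<forall>c\<in>S. has_rational_3cycle c)"
    unfolding Let_def by (rule part2[OF conjunct1[OF h] conjunct2[OF h]])
qed

end
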